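(* Every finite simple graph possesses an admissible ordering of its edges.
   Context: An admissible edge ordering of a graph $G$ is a total order $\succ$ on $E(G)$ such that for any edges $\{a,b\},\{c,d\}$ with $\{a,b\}\cap\{c,d\}=\emptyset$ and $\{a,b\}\succ\{c,d\}$, either all edges incident to $a$ are larger than $\{c,d\}$ or all edges incident to $b$ are larger than $\{c,d\}$. *)

theory Defs
  imports Main
begin

definition simple_graph :: "'a set \<Rightarrow> 'a set set \<Rightarrow> bool" where
  "simple_graph V E \<longleftrightarrow> finite V \<and> (\<forall>e\<in>E. e \<subseteq> V \<and> card e = 2)"

(* An edge ordering is a strict total order on E, given as a relation r where
   (f, e) \<in> r means  e \<succ> f  (e is larger than f). *)
definition admissible_edge_ordering :: "'a set set \<Rightarrow> ('a set \<times> 'a set) set \<Rightarrow> bool" where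
  "admissible_edge_ordering E r \<longleftrightarrow>
     strict_linear_order_on E r \<and> r \<subseteq> E \<times> E \<and>
     (\<forall>a b c d. {a, b} \<in> E \<longrightarrow> {c, d} \<in> E \<longrightarrow> {a, b} \<inter> {c, d} = {} \<longrightarrow>
        ({c, d}, {a, b}) \<in> r \<longrightarrow>
        (\<forall>e\<in>E. a \<in> e \<longrightarrow> ({c, d}, e) \<in> r) \<or>
        (\<forall>e\<in>E. b \<in> e \<longrightarrow> ({c, d}, e) \<in> r))"

end

theory Submission
  imports Defs
begin

theorem lemma6p2:
  fixes V :: "'a set" and E :: "'a set set"
  assumes "simple_graph V E"
  shows "\<exists>r. admissible_edge_ordering E r"
proof -
  have finV: "finite V" and EV: "\<And>e. e \<in> E \<Longrightarrow> e \<subseteq> V" and E2: "\<And>e. e \<in> E \<Longrightarrow> card e = 2"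
    using assms unfolding simple_graph_def by auto
  obtain f :: "'a \<Rightarrow> nat" and n where fi: "inj_on f V"
    using finite_imp_inj_to_nat_seg[OF finV] by blast
  define m where "m e = Min (f ` e)" for e
  define M where "M e = Max (f ` e)" for e
  have fin: "finite e" "e \<noteq> {}" if "e \<in> E" for e
    using E2[OF that] by (auto intro: card_ge_0_finite)
  have mmem: "m e \<in> f ` e" if "e \<in> E" for e
    unfolding m_def using fin[OF that] by simp
  have mle: "m e \<le> f x" if "e \<in> E" "x \<in> e" for e x
    unfolding m_def using fin[OF that(1)] that(2) by simp
  have key: "e = g" if "e \<in> E" "g \<in> E" "m e = m g" "M e = M g" for e g
  proof -
    have img: "f ` h = {m h, M h}" if hE: "h \<in> E" for h
    proof -
      obtain x y where h: "h = {x, y}" "x \<noteq> y" using E2[OF hE] by (auto simp: card_2_iff)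
      show ?thesis unfolding m_def M_def h by (auto simp: min_def max_def)
    qed
    have "f ` e = f ` g" using img that by simp
    thus ?thesis using fi EV that(1,2) by (meson inj_on_image_eq_iff)
  qed
  define r where "r = {(g, e). e \<in> E \<and> g \<in> E \<and> (m e < m g \<or> (m e = m g \<and> M e < M g))}"
  have "admissible_edge_ordering E r"
    unfolding admissible_edge_ordering_def strict_linear_order_on_def
  proof (intro conjI allI impI)
    show "trans r" unfolding r_def trans_def by auto
    show "irrefl r" unfolding r_def irrefl_def by auto
    show "total_on E r" unfolding total_on_def
    proof (intro ballI impI)
      fix e g assume "e \<in> E" "g \<in> E" "e \<noteq> g"
      hence "m e \<noteq> m g \<or> M e \<noteq> M g" using key by blast
      thus "(e, g) \<in> r \<or> (g, e) \<in> r" unfolding r_def using \<open>e \<in> E\<close> \<open>g \<in> E\<close> by auto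
    qed
    show "r \<subseteq> E \<times> E" unfolding r_def by auto
  next
    fix a b c d
    assume ab: "{a, b} \<in> E" and cd: "{c, d} \<in> E" and dj: "{a, b} \<inter> {c, d} = {}"
      and rr: "({c, d}, {a, b}) \<in> r"
    have "m {a,b} \<noteq> m {c,d}"
    proof
      assume eq: "m {a,b} = m {c,d}"
      obtain x where x: "x \<in> {a,b}" "m {a,b} = f x" using mmem[OF ab] by auto
      obtain y where y: "y \<in> {c,d}" "m {c,d} = f y" using mmem[OF cd] by auto
      have "x \<in> V" "y \<in> V" "f x = f y" using EV[OF ab] EV[OF cd] x y eq by auto
      hence "x = y" using fi by (simp add: inj_on_def)
      thus False using x y dj by auto
    qed
    hence lt: "m {a,b} < m {c,d}" using rr unfolding r_def by auto
    obtain x where x: "x \<in> {a,b}" "m {a,b} = f x" using mmem[OF ab] by auto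
    have "\<forall>e\<in>E. x \<in> e \<longrightarrow> ({c, d}, e) \<in> r"
    proof (intro ballI impI)
      fix e assume "e \<in> E" "x \<in> e"
      hence "m e < m {c,d}" using mle[of e x] lt x by simp
      thus "({c, d}, e) \<in> r" unfolding r_def using \<open>e \<in> E\<close> cd by simp
    qed
    thus "(\<forall>e\<in>E. a \<in> e \<longrightarrow> ({c, d}, e) \<in> r) \<or> (\<forall>e\<in>E. b \<in> e \<longrightarrow> ({c, d}, e) \<in> r)"
      using x by auto
  qed
  thus ?thesis by blast
qed

end
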